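(* For each $n\ge1$ and even $h\ge0$, the number $|\mathrm{UMap}(n,\mathbf N_h)|$ of $n$-vertex unicellular maps in $\mathbf N_h$ satisfies $|\mathrm{UMap}(n,\mathbf N_h)|\le c^{n+h}h^h$, where $c=2^7e^{3/2}$.
   Context: A map is a connected pseudograph (loops and multiple edges allowed, not necessarily simple) cellularly embedded in a surface, considered unlabelled and unrooted (up to isomorphism); it is unicellular if it has exactly one face. $\mathbf N_h$ is the non-orientable surface of Euler genus $h$, with $\mathbf N_0$ meaning the sphere. Convention $0^0=1$. *)

theory Defs
  imports Complex_Main
begin

text \<open>Combinatorial maps in the flag (graph-encoded map) representation.
A map with E edges is given by three involutions t0, t1, t2 on the flag set
{..<4*E}: t0 (vertex-changing), t1 (edge-changing), t2 (face-changing).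
The map with E = 0 encodes the trivial map (one vertex, no edges) on the sphere.\<close>

type_synonym fmap = "nat \<times> (nat \<Rightarrow> nat) \<times> (nat \<Rightarrow> nat) \<times> (nat \<Rightarrow> nat)"

definition flags :: "fmap \<Rightarrow> nat set" where
  "flags M = {..<4 * fst M}"

definition tau0 :: "fmap \<Rightarrow> nat \<Rightarrow> nat" where "tau0 M = fst (snd M)"
definition tau1 :: "fmap \<Rightarrow> nat \<Rightarrow> nat" where "tau1 M = fst (snd (snd M))"
definition tau2 :: "fmap \<Rightarrow> nat \<Rightarrow> nat" where "tau2 M = snd (snd (snd M))"

definition fpf_involution_on :: "nat set \<Rightarrow> (nat \<Rightarrow> nat) \<Rightarrow> bool" where
  "fpf_involution_on S t \<longleftrightarrow>
     (\<forall>x\<in>S. t x \<in> S \<and> t (t x) = x \<and> t x \<noteq> x) \<and> (\<forall>x. x \<notin> S \<longrightarrow> t x = x)"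

definition orbit_rel :: "nat set \<Rightarrow> (nat \<Rightarrow> nat) list \<Rightarrow> (nat \<times> nat) set" where
  "orbit_rel S ts = {(x, t x) | x t. x \<in> S \<and> t \<in> set ts}\<^sup>*"

definition num_orbits :: "nat set \<Rightarrow> (nat \<Rightarrow> nat) list \<Rightarrow> nat" where
  "num_orbits S ts = card (S // orbit_rel S ts)"

definition is_map :: "fmap \<Rightarrow> bool" where
  "is_map M \<longleftrightarrow>
     fpf_involution_on (flags M) (tau0 M) \<and>
     fpf_involution_on (flags M) (tau1 M) \<and>
     fpf_involution_on (flags M) (tau2 M) \<and>
     (\<forall>x. tau0 M (tau2 M x) = tau2 M (tau0 M x)) \<and>
     (\<forall>x\<in>flags M. tau0 M (tau2 M x) \<noteq> x) \<and>
     (fst M = 0 \<or> num_orbits (flags M) [tau0 M, tau1 M, tau2 M] = 1)"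

definition num_vertices :: "fmap \<Rightarrow> nat" where
  "num_vertices M = (if fst M = 0 then 1 else num_orbits (flags M) [tau1 M, tau2 M])"

definition num_edges :: "fmap \<Rightarrow> nat" where
  "num_edges M = fst M"

definition num_faces :: "fmap \<Rightarrow> nat" where
  "num_faces M = (if fst M = 0 then 1 else num_orbits (flags M) [tau0 M, tau1 M])"

definition euler_genus :: "fmap \<Rightarrow> int" where
  "euler_genus M = 2 - int (num_vertices M) + int (num_edges M) - int (num_faces M)"

definition orientable :: "fmap \<Rightarrow> bool" where
  "orientable M \<longleftrightarrow> (\<exists>c :: nat \<Rightarrow> bool. \<forall>x\<in>flags M.
       c (tau0 M x) \<noteq> c x \<and> c (tau1 M x) \<noteq> c x \<and> c (tau2 M x) \<noteq> c x)"

text \<open>The map lies in N_h: Euler genus h, and non-orientable if h > 0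
 (N_0 is the sphere).\<close>
definition in_N :: "nat \<Rightarrow> fmap \<Rightarrow> bool" where
  "in_N h M \<longleftrightarrow> euler_genus M = int h \<and> (h > 0 \<longrightarrow> \<not> orientable M)"

definition map_iso :: "(fmap \<times> fmap) set" where
  "map_iso = {(M, M'). fst M = fst M' \<and>
      (\<exists>\<sigma>. bij_betw \<sigma> (flags M) (flags M') \<and>
        (\<forall>x\<in>flags M. \<sigma> (tau0 M x) = tau0 M' (\<sigma> x) \<and>
                      \<sigma> (tau1 M x) = tau1 M' (\<sigma> x) \<and>
                      \<sigma> (tau2 M x) = tau2 M' (\<sigma> x)))}"

definition UMap_reps :: "nat \<Rightarrow> nat \<Rightarrow> fmap set" where
  "UMap_reps n h = {M. is_map M \<and> num_vertices M = n \<and> num_faces M = 1 \<and> in_N h M}"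

definition num_UMap :: "nat \<Rightarrow> nat \<Rightarrow> nat" where
  "num_UMap n h = card (UMap_reps n h // map_iso)"

end

theory Submission
  imports Defs "HOL-Library.FuncSet" "HOL-Combinatorics.Multiset_Permutations"
begin

definition phi :: "(nat \<Rightarrow> nat) \<Rightarrow> (nat \<Rightarrow> nat) \<Rightarrow> nat \<times> bool \<Rightarrow> nat \<times> bool" where
  "phi a b u = (if snd u then (b (fst u), False) else (a (fst u), True))"

definition Rf :: "nat \<times> bool \<Rightarrow> nat \<times> bool" where
  "Rf u = (fst u, \<not> snd u)"

lemma funpow_split: "i \<le> j \<Longrightarrow> (f ^^ j) u = (f ^^ i) ((f ^^ (j - i)) u)"
proof -
  assume "i \<le> j"
  then have "j = i + (j - i)" by simp
  then have "(f ^^ j) u = (f ^^ (i + (j - i))) u" by simp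
  also have "\<dots> = (f ^^ i) ((f ^^ (j - i)) u)" by (simp only: funpow_add o_apply)
  finally show ?thesis .
qed

locale dih =
  fixes F :: "nat set" and a b :: "nat \<Rightarrow> nat"
  assumes finF: "finite F"
    and ia: "\<And>y. a (a y) = y" and ib: "\<And>y. b (b y) = y"
    and fa: "\<And>y. y \<in> F \<Longrightarrow> a y \<noteq> y" and fb: "\<And>y. y \<in> F \<Longrightarrow> b y \<noteq> y"
    and ca: "\<And>y. y \<in> F \<Longrightarrow> a y \<in> F" and cb: "\<And>y. y \<in> F \<Longrightarrow> b y \<in> F"
begin

abbreviation "ph \<equiv> phi a b"

lemma ph_inj: "inj ph"
  unfolding inj_def phi_def
  by (auto split: if_splits simp: prod_eq_iff) (metis ia ib)+

lemma phn_inj: "inj (ph ^^ k)"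
  by (simp add: ph_inj)

lemma phRph: "ph (Rf (ph u)) = Rf u"
  by (cases u) (auto simp: phi_def Rf_def ia ib)

lemma phnRphn: "(ph ^^ k) (Rf ((ph ^^ k) u)) = Rf u"
proof (induction k arbitrary: u)
  case 0 then show ?case by simp
next
  case (Suc k)
  have "(ph ^^ Suc k) (Rf ((ph ^^ Suc k) u)) = (ph ^^ k) (ph (Rf (ph ((ph ^^ k) u))))"
    by (simp add: funpow_swap1)
  also have "\<dots> = (ph ^^ k) (Rf ((ph ^^ k) u))" by (simp add: phRph)
  also have "\<dots> = Rf u" by (rule Suc)
  finally show ?case .
qed

lemma snd_phn: "snd ((ph ^^ k) (x, False)) = odd k"
  by (induction k) (auto simp: phi_def)

lemma fst_phn_in: "x \<in> F \<Longrightarrow> fst ((ph ^^ k) (x, c)) \<in> F"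
  by (induction k) (auto simp: phi_def ca cb)

definition w :: "nat \<Rightarrow> nat \<Rightarrow> nat" where
  "w x i = fst ((ph ^^ i) (x, False))"

lemma phn_eq: "(ph ^^ i) (x, False) = (w x i, odd i)"
  by (simp add: w_def prod_eq_iff snd_phn)

lemma w_0[simp]: "w x 0 = x" by (simp add: w_def)

lemma w_Suc: "w x (Suc i) = (if even i then a (w x i) else b (w x i))"
proof -
  have "w x (Suc i) = fst (ph ((ph ^^ i) (x, False)))" by (simp add: w_def)
  also have "\<dots> = fst (ph (w x i, odd i))" by (simp only: phn_eq)
  finally show ?thesis by (simp add: phi_def)
qed

lemma w_in: "x \<in> F \<Longrightarrow> w x i \<in> F"
  by (simp add: w_def fst_phn_in)

lemma ex_return: assumes "x \<in> F" shows "\<exists>k>0. (ph ^^ k) (x, False) = (x, False)"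
proof -
  let ?A = "F \<times> (UNIV :: bool set)"
  have finA: "finite ?A" using finF by simp
  let ?f = "\<lambda>i. (ph ^^ i) (x, False)"
  have sub: "?f ` {..card ?A} \<subseteq> ?A" using assms by (auto simp: phn_eq w_in)
  have "\<not> inj_on ?f {..card ?A}"
  proof
    assume "inj_on ?f {..card ?A}"
    then have "card {..card ?A} \<le> card ?A" using card_inj_on_le[OF _ sub finA] by simp
    then show False by simp
  qed
  then obtain i j where ij: "i < j" "?f i = ?f j"
    unfolding inj_on_def by (metis linorder_neqE_nat)
  then have "(ph ^^ i) ((ph ^^ (j - i)) (x, False)) = (ph ^^ i) (x, False)"
    using funpow_split[of i j ph] by (metis less_imp_le_nat)
  then have "(ph ^^ (j - i)) (x, False) = (x, False)"
    using phn_inj injD by metis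
  with ij show ?thesis by (intro exI[of _ "j - i"]) auto
qed

definition per :: "nat \<Rightarrow> nat" where
  "per x = (LEAST k. k > 0 \<and> (ph ^^ k) (x, False) = (x, False))"

lemma per: assumes "x \<in> F"
  shows "per x > 0" "(ph ^^ per x) (x, False) = (x, False)"
  using LeastI_ex[OF ex_return[OF assms]] unfolding per_def by auto

lemma per_min: "0 < k \<Longrightarrow> k < per x \<Longrightarrow> (ph ^^ k) (x, False) \<noteq> (x, False)"
  unfolding per_def using not_less_Least by blast

lemma per_even: assumes "x \<in> F" shows "even (per x)"
  using per(2)[OF assms] by (simp add: phn_eq)

lemma w_per: assumes "x \<in> F" shows "w x (per x) = x"
  using per(2)[OF assms] by (simp add: phn_eq)

lemma phn_distinct: assumes "i < j" "j < per x"
  shows "(ph ^^ i) (x, False) \<noteq> (ph ^^ j) (x, False)"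
proof
  assume "(ph ^^ i) (x, False) = (ph ^^ j) (x, False)"
  then have "(ph ^^ i) ((ph ^^ (j - i)) (x, False)) = (ph ^^ i) (x, False)"
    using funpow_split[of i j ph] assms(1) by (metis less_imp_le_nat)
  then have "(ph ^^ (j - i)) (x, False) = (x, False)"
    using phn_inj injD by metis
  moreover have "j - i < per x" using assms by linarith
  ultimately show False using per_min[of "j - i" x] assms by auto
qed

lemma no_odd_R: assumes "x \<in> F" "odd k" shows "(ph ^^ k) (x, False) \<noteq> Rf (x, False)"
proof
  assume H: "(ph ^^ k) (x, False) = Rf (x, False)"
  obtain l where k: "k = Suc (2 * l)" using assms(2) oddE by (metis Suc_eq_plus1)
  define z where "z = (ph ^^ l) (x, False)"
  have "(ph ^^ l) (ph z) = (ph ^^ (l + Suc l)) (x, False)" unfolding z_def by (simp add: funpow_add, metis funpow_swap1)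
  also have "l + Suc l = k" using k by simp
  finally have "(ph ^^ l) (ph z) = Rf (x, False)" using H by simp
  moreover have "(ph ^^ l) (Rf z) = Rf (x, False)" unfolding z_def by (rule phnRphn)
  ultimately have "ph z = Rf z" using phn_inj injD by metis
  moreover have "fst z \<in> F" unfolding z_def using assms(1) by (rule fst_phn_in)
  ultimately show False
    by (cases z) (auto simp: phi_def Rf_def fa fb split: if_splits)
qed

lemma w_inj: assumes "x \<in> F" shows "inj_on (w x) {..<per x}"
proof (rule inj_onI)
  fix i j assume i: "i \<in> {..<per x}" and j: "j \<in> {..<per x}" and e: "w x i = w x j"
  show "i = j"
  proof (rule ccontr)
    assume ne: "i \<noteq> j"
    show False
    proof (cases "odd i = odd j")
      case True
      then have "(ph ^^ i) (x, False) = (ph ^^ j) (x, False)" using e by (simp add: phn_eq)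
      then show False using phn_distinct i j ne
        by (metis lessThan_iff linorder_neqE_nat)
    next
      case False
      then have "(ph ^^ j) (x, False) = Rf ((ph ^^ i) (x, False))"
        using e by (simp add: phn_eq Rf_def)
      then have "(ph ^^ i) ((ph ^^ j) (x, False)) = Rf (x, False)"
        using phnRphn by metis
      then have "(ph ^^ (i + j)) (x, False) = Rf (x, False)" by (simp add: funpow_add)
      moreover have "odd (i + j)" using False by auto
      ultimately show False using no_odd_R assms by blast
    qed
  qed
qed

lemma w_last: assumes "x \<in> F" shows "w x (per x - 1) = b x"
proof -
  have p: "per x = Suc (per x - 1)" using per(1)[OF assms] by simp
  have "w x (per x) = x" using w_per[OF assms] .
  then have "b (w x (per x - 1)) = x"
    using w_Suc[of x "per x - 1"] per_even[OF assms] p by (metis even_Suc)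
  then show ?thesis by (metis ib)
qed

lemma a_w: "a (w x i) = (if even i then w x (Suc i) else w x (i - 1))"
proof (cases "even i")
  case True then show ?thesis by (simp add: w_Suc)
next
  case False
  define j where "j = i - 1"
  have i: "i = Suc j" and "even j" using False by (auto simp: j_def)
  then show ?thesis using False by (simp add: w_Suc ia)
qed

lemma b_w: assumes "x \<in> F" "i < per x"
  shows "b (w x i) = (if odd i then (if Suc i = per x then x else w x (Suc i))
                      else (if i = 0 then w x (per x - 1) else w x (i - 1)))"
proof (cases "odd i")
  case True then show ?thesis using w_per[OF assms(1)] w_Suc[of x i] by auto
next
  case False
  show ?thesis
  proof (cases "i = 0")
    case True then show ?thesis using False w_last[OF assms(1)] by (simp add: ib)
  next
    case F0: False
    define j where "j = i - 1"
    have i: "i = Suc j" and "odd j" using False F0 by (auto simp: j_def)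
    then show ?thesis using False by (simp add: w_Suc ib)
  qed
qed

definition W :: "nat \<Rightarrow> nat set" where "W x = w x ` {..<per x}"

lemma x_in_W: "x \<in> F \<Longrightarrow> x \<in> W x"
  unfolding W_def using per(1) by (auto intro!: image_eqI[of _ _ 0])

lemma W_closed: assumes "x \<in> F" "y \<in> W x" shows "a y \<in> W x" "b y \<in> W x"
proof -
  obtain i where i: "i < per x" "y = w x i" using assms(2) unfolding W_def by auto
  have pe: "even (per x)" "per x > 0" using per_even per assms(1) by auto
  show "a y \<in> W x"
  proof (cases "even i")
    case True
    have "Suc i \<noteq> per x"
    proof
      assume "Suc i = per x"
      then have "even (Suc i)" using pe by simp
      then show False using True by simp
    qed
    then have "Suc i < per x" using i by simp
    then show ?thesis using True i unfolding W_def by (auto simp: a_w)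
  next
    case False then show ?thesis using i unfolding W_def by (auto simp: a_w)
  qed
  have m: "w x j \<in> W x" if "j < per x" for j using that unfolding W_def by auto
  show "b y \<in> W x"
  proof (cases "odd i")
    case True
    show ?thesis
    proof (cases "Suc i = per x")
      case True then show ?thesis using b_w[OF assms(1) i(1)] \<open>odd i\<close> i x_in_W[OF assms(1)] by simp
    next
      case False then have "Suc i < per x" using i by simp
      then show ?thesis using b_w[OF assms(1) i(1)] \<open>odd i\<close> i m False by simp
    qed
  next
    case False
    show ?thesis
    proof (cases "i = 0")
      case True then show ?thesis using b_w[OF assms(1) i(1)] False i m pe by simp
    next
      case F2: False then show ?thesis using b_w[OF assms(1) i(1)] False i m[of "i - 1"] by simp
    qed
  qed
qed

lemma W_card: "x \<in> F \<Longrightarrow> card (W x) = per x"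
  unfolding W_def using w_inj by (simp add: card_image)

lemma W_sub: "x \<in> F \<Longrightarrow> W x \<subseteq> F"
  unfolding W_def using w_in by auto

lemma orbit_W: assumes "x \<in> F" shows "orbit_rel F [b, a] `` {x} = W x"
proof
  show "orbit_rel F [b, a] `` {x} \<subseteq> W x"
  proof
    fix y assume "y \<in> orbit_rel F [b, a] `` {x}"
    then have "(x, y) \<in> {(x, t x) | x t. x \<in> F \<and> t \<in> set [b, a]}\<^sup>*"
      unfolding orbit_rel_def by simp
    then show "y \<in> W x"
    proof (induction rule: rtrancl_induct)
      case base then show ?case using x_in_W[OF assms] .
    next
      case (step y z) then show ?case using W_closed[OF assms] by auto
    qed
  qed
next
  show "W x \<subseteq> orbit_rel F [b, a] `` {x}"
  proof
    fix y assume "y \<in> W x"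
    then obtain i where "y = w x i" unfolding W_def by auto
    moreover have "(x, w x i) \<in> orbit_rel F [b, a]" for i
    proof (induction i)
      case 0 then show ?case unfolding orbit_rel_def by simp
    next
      case (Suc i)
      have "(w x i, w x (Suc i)) \<in> {(x, t x) | x t. x \<in> F \<and> t \<in> set [b, a]}"
        using w_in[OF assms, of i] by (auto simp: w_Suc)
      then show ?case using Suc unfolding orbit_rel_def by (meson rtrancl.rtrancl_into_rtrancl)
    qed
    ultimately show "y \<in> orbit_rel F [b, a] `` {x}" by simp
  qed
qed

end

definition std :: "nat \<Rightarrow> nat \<Rightarrow> nat" where
  "std E z = (if z < 4 * E then (if even z then Suc z else z - 1) else z)"

definition t0ok :: "nat \<Rightarrow> (nat \<Rightarrow> nat) \<Rightarrow> bool" where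
  "t0ok E t \<longleftrightarrow> fpf_involution_on {..<4 * E} t \<and> (\<forall>z<4 * E. t (std E z) = std E (t z))
      \<and> (\<forall>z<4 * E. t (std E z) \<noteq> z)"

definition piL :: "(nat \<Rightarrow> nat) \<Rightarrow> nat \<Rightarrow> nat" where
  "piL t i = t (2 * i) div 2"

definition LL :: "nat \<Rightarrow> (nat \<Rightarrow> nat) \<Rightarrow> nat set" where
  "LL E t = {i. i < 2 * E \<and> i < piL t i}"

definition code0 :: "nat \<Rightarrow> (nat \<Rightarrow> nat) \<Rightarrow> nat set \<times> (nat \<Rightarrow> nat)" where
  "code0 E t = (LL E t, restrict (\<lambda>i. t (2 * i)) (LL E t))"

lemma std_inv: "z < 4 * E \<Longrightarrow> std E (std E z) = z"
  by (auto simp: std_def)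

lemma std_lt: "z < 4 * E \<Longrightarrow> std E z < 4 * E"
  by (auto simp: std_def)

lemma std_div: "z < 4 * E \<Longrightarrow> std E z div 2 = z div 2"
  by (auto simp: std_def) presburger+

lemma std_cases: "z < 4 * E \<Longrightarrow> z div 2 = y div 2 \<Longrightarrow> y = z \<or> y = std E z"
  by (auto simp: std_def) presburger+

context
  fixes E :: nat and t :: "nat \<Rightarrow> nat"
  assumes ok: "t0ok E t"
begin

lemma ok_lt: "z < 4 * E \<Longrightarrow> t z < 4 * E"
  using ok unfolding t0ok_def fpf_involution_on_def by auto

lemma ok_inv: "z < 4 * E \<Longrightarrow> t (t z) = z"
  using ok unfolding t0ok_def fpf_involution_on_def by auto

lemma ok_fp: "z < 4 * E \<Longrightarrow> t z \<noteq> z"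
  using ok unfolding t0ok_def fpf_involution_on_def by auto

lemma ok_comm: "z < 4 * E \<Longrightarrow> t (std E z) = std E (t z)"
  using ok unfolding t0ok_def by auto

lemma ok_fp2: "z < 4 * E \<Longrightarrow> t (std E z) \<noteq> z"
  using ok unfolding t0ok_def by auto

lemma piL_ne: assumes "i < 2 * E" shows "piL t i \<noteq> i"
proof
  assume H: "piL t i = i"
  have z: "2 * i < 4 * E" using assms by simp
  have "t (2 * i) = 2 * i \<or> t (2 * i) = std E (2 * i)"
    using std_cases[OF z, of "t (2*i)"] H by (simp add: piL_def)
  moreover have "t (2 * i) \<noteq> 2 * i" using ok_fp[OF z] .
  moreover have "t (2 * i) \<noteq> std E (2 * i)"
  proof
    assume "t (2 * i) = std E (2 * i)"
    then have "t (std E (2 * i)) = 2 * i" using ok_inv[OF z] by metis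
    then show False using ok_fp2[OF z] by simp
  qed
  ultimately show False by blast
qed

lemma piL_lt: "i < 2 * E \<Longrightarrow> piL t i < 2 * E"
  using ok_lt[of "2 * i"] by (simp add: piL_def)

lemma piL_inv: assumes "i < 2 * E" shows "piL t (piL t i) = i"
proof -
  have z: "2 * i < 4 * E" using assms by simp
  define y where "y = t (2 * i)"
  have y: "y < 4 * E" using ok_lt[OF z] by (simp add: y_def)
  define j where "j = y div 2"
  have yj: "y = 2 * j \<or> y = std E (2 * j)"
    using std_cases[of "2 * j" E y] y unfolding j_def by (auto simp: std_def)
  have j: "2 * j < 4 * E" using y unfolding j_def by simp
  have "t (2 * j) = 2 * i \<or> t (2 * j) = std E (2 * i)"
  proof (cases "y = 2 * j")
    case True then show ?thesis using ok_inv[OF z] y_def by metis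
  next
    case False
    then have "y = std E (2 * j)" using yj by simp
    then have "t (std E (2 * j)) = 2 * i" using ok_inv[OF z] y_def by metis
    then have "std E (t (2 * j)) = 2 * i" using ok_comm[OF j] by simp
    then have "std E (std E (t (2 * j))) = std E (2 * i)" by simp
    then show ?thesis using std_inv[OF ok_lt[OF j]] by simp
  qed
  then have "t (2 * j) div 2 = i" using std_div[OF z] by auto
  then show ?thesis by (simp add: piL_def j_def y_def)
qed

lemma card_LL: "card (LL E t) \<le> E"
proof -
  have sub: "LL E t \<subseteq> {..<2 * E}" unfolding LL_def by auto
  have inj: "inj_on (piL t) (LL E t)"
    by (rule inj_onI) (metis piL_inv LL_def mem_Collect_eq)
  have sub2: "piL t ` LL E t \<subseteq> {..<2 * E}" using piL_lt unfolding LL_def by auto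
  have disj: "LL E t \<inter> piL t ` LL E t = {}"
    unfolding LL_def using piL_inv by fastforce
  have "card (LL E t \<union> piL t ` LL E t) \<le> card {..<2 * E}"
    by (rule card_mono) (use sub sub2 in auto)
  moreover have "card (LL E t \<union> piL t ` LL E t) = card (LL E t) + card (LL E t)"
    using card_Un_disjoint[OF finite_subset[OF sub] _ disj] inj sub2 card_image
    by (metis finite_lessThan finite_subset)
  ultimately show ?thesis by simp
qed

end

lemma code0_inj: "inj_on (code0 E) {t. t0ok E t}"
proof (rule inj_onI)
  fix t t' assume "t \<in> {t. t0ok E t}" "t' \<in> {t. t0ok E t}" and eq: "code0 E t = code0 E t'"
  then have ok: "t0ok E t" and ok': "t0ok E t'" by auto
  have L: "LL E t = LL E t'" using eq by (simp add: code0_def)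
  have V: "t (2 * i) = t' (2 * i)" if "i \<in> LL E t" for i
  proof -
    have "restrict (\<lambda>i. t (2 * i)) (LL E t) = restrict (\<lambda>i. t' (2 * i)) (LL E t')"
      using arg_cong[OF eq, of snd] by (simp only: code0_def snd_conv)
    then have "restrict (\<lambda>i. t (2 * i)) (LL E t) i = restrict (\<lambda>i. t' (2 * i)) (LL E t') i"
      by simp
    then show ?thesis using that L by simp
  qed
  show "t = t'"
  proof
    fix z
    show "t z = t' z"
    proof (cases "z < 4 * E")
      case False
      then show ?thesis using ok ok' unfolding t0ok_def fpf_involution_on_def by auto
    next
      case True
      define i where "i = z div 2"
      have i2: "i < 2 * E" using True unfolding i_def by simp
      have z2: "2 * i < 4 * E" using i2 by simp
      have zc: "z = 2 * i \<or> z = std E (2 * i)"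
        using std_cases[OF z2, of z] unfolding i_def by simp
      show ?thesis
      proof (cases "i \<in> LL E t")
        case True
        have "t (2 * i) = t' (2 * i)" using V True by simp
        moreover have "t (std E (2 * i)) = t' (std E (2 * i))"
          using ok_comm[OF ok z2] ok_comm[OF ok' z2] V[OF True] by simp
        ultimately show ?thesis using zc by auto
      next
        case False
        define j where "j = piL t i"
        have ji: "j \<noteq> i" using piL_ne[OF ok i2] j_def by simp
        have jlt: "j < 2 * E" using piL_lt[OF ok i2] j_def by simp
        have "\<not> i < j" using False i2 unfolding LL_def j_def by auto
        then have "j < i" using ji by simp
        moreover have "piL t j = i" using piL_inv[OF ok i2] j_def by simp
        ultimately have jL: "j \<in> LL E t" using jlt unfolding LL_def by simp
        define u where "u = t (2 * j)"
        have j2: "2 * j < 4 * E" using jlt by simp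
        have u: "u < 4 * E" using ok_lt[OF ok j2] u_def by simp
        have ui: "u div 2 = i" using \<open>piL t j = i\<close> by (simp add: piL_def u_def)
        have u': "t' (2 * j) = u" using V[OF jL] u_def by simp
        have a1: "t u = 2 * j" using ok_inv[OF ok j2] u_def by simp
        have a2: "t' u = 2 * j" using ok_inv[OF ok' j2] u' by simp
        have b1: "t (std E u) = std E (2 * j)" using ok_comm[OF ok u] a1 by simp
        have b2: "t' (std E u) = std E (2 * j)" using ok_comm[OF ok' u] a2 by simp
        have "z = u \<or> z = std E u" using std_cases[OF u, of z] ui i_def by simp
        then show ?thesis using a1 a2 b1 b2 by auto
      qed
    qed
  qed
qed

definition CodeSet :: "nat \<Rightarrow> (nat set \<times> (nat \<Rightarrow> nat)) set" where
  "CodeSet E = Sigma (Pow {..<2 * E}) (\<lambda>L. if card L \<le> E then L \<rightarrow>\<^sub>E {..<4 * E} else {})"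

lemma code0_in: "t0ok E t \<Longrightarrow> code0 E t \<in> CodeSet E"
  unfolding CodeSet_def code0_def using card_LL[of E t] ok_lt[of E t]
  by (auto simp: LL_def PiE_def extensional_def Pi_def)

lemma card_CodeSet: assumes "E > 0" shows "card (CodeSet E) \<le> 4 ^ E * (4 * E) ^ E"
proof -
  have "card (CodeSet E) = (\<Sum>L\<in>Pow {..<2 * E}. card (if card L \<le> E then L \<rightarrow>\<^sub>E {..<4 * E} else {}))"
    unfolding CodeSet_def by (rule card_SigmaI) (auto simp: finite_subset finite_PiE)
  also have "\<dots> \<le> (\<Sum>L\<in>Pow {..<2 * E}. (4 * E) ^ E)"
  proof (rule sum_mono)
    fix L assume "L \<in> Pow {..<2 * E}"
    then have fL: "finite L" by (auto simp: finite_subset)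
    show "card (if card L \<le> E then L \<rightarrow>\<^sub>E {..<4 * E} else {}) \<le> (4 * E) ^ E"
    proof (cases "card L \<le> E")
      case True
      then have "card (L \<rightarrow>\<^sub>E {..<4 * E}) = (4 * E) ^ card L" by (subst card_PiE[OF fL]) (simp add: power_mult_distrib)
      also have "\<dots> \<le> (4 * E) ^ E" using True assms by (intro power_increasing) auto
      finally show ?thesis using True by simp
    qed simp
  qed
  also have "\<dots> = 2 ^ (2 * E) * (4 * E) ^ E" by (simp add: card_Pow)
  also have "\<dots> = 4 ^ E * (4 * E) ^ E" by (simp add: power_mult)
  finally show ?thesis .
qed

lemma finite_CodeSet: "finite (CodeSet E)"
  unfolding CodeSet_def by (auto simp: finite_subset finite_PiE)

lemma card_t0ok: assumes "E > 0" shows "card {t. t0ok E t} \<le> 4 ^ E * (4 * E) ^ E"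
proof -
  have "card {t. t0ok E t} = card (code0 E ` {t. t0ok E t})"
    using code0_inj card_image by metis
  also have "\<dots> \<le> card (CodeSet E)"
    by (rule card_mono) (auto simp: finite_CodeSet code0_in)
  finally show ?thesis using card_CodeSet[OF assms] by simp
qed

lemma finite_t0ok: "finite {t. t0ok E t}"
proof -
  have "finite (CodeSet E)" by (rule finite_CodeSet)
  then show ?thesis using code0_inj code0_in finite_imageD finite_subset
    by (metis (no_types, lifting) image_subsetI mem_Collect_eq)
qed

definition cj :: "(nat \<Rightarrow> nat) \<Rightarrow> fmap \<Rightarrow> (nat \<Rightarrow> nat) \<Rightarrow> nat \<Rightarrow> nat" where
  "cj s M t z = (if z < 4 * fst M then s (t (inv_into (flags M) s z)) else z)"

definition tr :: "(nat \<Rightarrow> nat) \<Rightarrow> fmap \<Rightarrow> fmap" where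
  "tr s M = (fst M, cj s M (tau0 M), cj s M (tau1 M), cj s M (tau2 M))"

lemma tr_simps: "fst (tr s M) = fst M" "tau0 (tr s M) = cj s M (tau0 M)"
  "tau1 (tr s M) = cj s M (tau1 M)" "tau2 (tr s M) = cj s M (tau2 M)"
  by (simp_all add: tr_def tau0_def tau1_def tau2_def)

lemma flags_tr: "flags (tr s M) = flags M"
  by (simp add: flags_def tr_simps)

lemma cj_at: assumes "bij_betw s (flags M) {..<4 * fst M}" "x \<in> flags M"
  shows "cj s M t (s x) = s (t x)"
proof -
  have "s x < 4 * fst M" using assms bij_betwE by blast
  moreover have "inv_into (flags M) s (s x) = x"
    using assms bij_betw_imp_inj_on inv_into_f_f by metis
  ultimately show ?thesis by (simp add: cj_def)
qed

lemma cj_out: "\<not> z < 4 * fst M \<Longrightarrow> cj s M t z = z"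
  by (simp add: cj_def)

lemma tr_iso: assumes "bij_betw s (flags M) {..<4 * fst M}"
  shows "(M, tr s M) \<in> map_iso"
proof -
  have "bij_betw s (flags M) (flags (tr s M))"
    using assms by (simp add: flags_def tr_simps)
  moreover have "\<forall>x\<in>flags M. s (tau0 M x) = tau0 (tr s M) (s x) \<and>
                      s (tau1 M x) = tau1 (tr s M) (s x) \<and>
                      s (tau2 M x) = tau2 (tr s M) (s x)"
    using cj_at[OF assms] by (simp add: tr_simps)
  ultimately show ?thesis unfolding map_iso_def by (auto simp: tr_simps)
qed

lemma map_iso_sym: assumes "(M, N) \<in> map_iso"
  and cl: "\<And>x. x \<in> flags M \<Longrightarrow> tau0 M x \<in> flags M \<and> tau1 M x \<in> flags M \<and> tau2 M x \<in> flags M"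
  shows "(N, M) \<in> map_iso"
proof -
  from assms obtain s where fs: "fst M = fst N" and b: "bij_betw s (flags M) (flags N)"
    and c: "\<forall>x\<in>flags M. s (tau0 M x) = tau0 N (s x) \<and> s (tau1 M x) = tau1 N (s x) \<and>
                      s (tau2 M x) = tau2 N (s x)"
    unfolding map_iso_def by auto
  let ?r = "inv_into (flags M) s"
  have b': "bij_betw ?r (flags N) (flags M)" using b by (rule bij_betw_inv_into)
  have fM: "finite (flags M)" "\<And>x. x \<in> flags M \<Longrightarrow> tau0 M x \<in> flags M \<or> True" by (auto simp: flags_def)
  have "\<forall>z\<in>flags N. ?r (tau0 N z) = tau0 M (?r z) \<and> ?r (tau1 N z) = tau1 M (?r z) \<and>
                      ?r (tau2 N z) = tau2 M (?r z)"
  proof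
    fix z assume z: "z \<in> flags N"
    define x where "x = ?r z"
    have x: "x \<in> flags M" using b' z bij_betwE x_def by blast
    have sx: "s x = z" using b z x_def bij_betw_inv_into_right by metis
    have inj: "inj_on s (flags M)" using b bij_betw_imp_inj_on by blast
    have "?r (s y) = y" if "y \<in> flags M" for y using inj that inv_into_f_f by metis
    then show "?r (tau0 N z) = tau0 M (?r z) \<and> ?r (tau1 N z) = tau1 M (?r z) \<and>
                      ?r (tau2 N z) = tau2 M (?r z)"
      using c x sx x_def cl[OF x] by metis
  qed
  then show ?thesis using b' fs unfolding map_iso_def by auto
qed

lemma map_iso_trans: assumes "(M, N) \<in> map_iso" "(N, P) \<in> map_iso"
  shows "(M, P) \<in> map_iso"
proof -
  from assms(1) obtain s where fs: "fst M = fst N" and b: "bij_betw s (flags M) (flags N)"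
    and c: "\<forall>x\<in>flags M. s (tau0 M x) = tau0 N (s x) \<and> s (tau1 M x) = tau1 N (s x) \<and>
                      s (tau2 M x) = tau2 N (s x)"
    unfolding map_iso_def by auto
  from assms(2) obtain s' where fs': "fst N = fst P" and b': "bij_betw s' (flags N) (flags P)"
    and c': "\<forall>x\<in>flags N. s' (tau0 N x) = tau0 P (s' x) \<and> s' (tau1 N x) = tau1 P (s' x) \<and>
                      s' (tau2 N x) = tau2 P (s' x)"
    unfolding map_iso_def by auto
  have "bij_betw (s' \<circ> s) (flags M) (flags P)" using b b' by (rule bij_betw_trans)
  moreover have "\<forall>x\<in>flags M. (s' \<circ> s) (tau0 M x) = tau0 P ((s' \<circ> s) x) \<and>
     (s' \<circ> s) (tau1 M x) = tau1 P ((s' \<circ> s) x) \<and> (s' \<circ> s) (tau2 M x) = tau2 P ((s' \<circ> s) x)"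
  proof
    fix x assume x: "x \<in> flags M"
    then have "s x \<in> flags N" using b bij_betwE by blast
    then show "(s' \<circ> s) (tau0 M x) = tau0 P ((s' \<circ> s) x) \<and>
     (s' \<circ> s) (tau1 M x) = tau1 P ((s' \<circ> s) x) \<and> (s' \<circ> s) (tau2 M x) = tau2 P ((s' \<circ> s) x)"
      using c c' x by simp
  qed
  ultimately show ?thesis using fs fs' unfolding map_iso_def by auto
qed

definition blk :: "nat \<Rightarrow> nat set \<Rightarrow> nat \<Rightarrow> nat" where
  "blk E S z = (if z < 4 * E then
     (let s = Max {s\<in>S. s \<le> z}; e = Min ({s\<in>S. z < s} \<union> {4 * E}) in
      if even z then (if z = s then e - 1 else z - 1) else (if Suc z = e then s else Suc z))
   else z)"

lemma blk_at:
  assumes mono: "\<And>i j. i < j \<Longrightarrow> j \<le> n \<Longrightarrow> off i < (off j :: nat)"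
    and offn: "off n = 4 * E" and k: "k < n" and z: "off k \<le> z" "z < off (Suc k)"
  shows "Max {s \<in> off ` {..<n}. s \<le> z} = off k"
    and "Min ({s \<in> off ` {..<n}. z < s} \<union> {4 * E}) = off (Suc k)"
proof -
  have mono': "off i \<le> off j" if "i \<le> j" "j \<le> n" for i j
    using mono[of i j] that by (cases "i = j") auto
  show "Max {s \<in> off ` {..<n}. s \<le> z} = off k"
  proof (rule Max_eqI)
    show "finite {s \<in> off ` {..<n}. s \<le> z}" by simp
    show "off k \<in> {s \<in> off ` {..<n}. s \<le> z}" using k z by auto
    fix y assume "y \<in> {s \<in> off ` {..<n}. s \<le> z}"
    then obtain j where j: "j < n" "y = off j" "off j \<le> z" by auto
    have "j \<le> k"
    proof (rule ccontr)
      assume "\<not> j \<le> k"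
      then have "off (Suc k) \<le> off j" using mono' j by simp
      then show False using j z by simp
    qed
    then show "y \<le> off k" using mono' j k by simp
  qed
  show "Min ({s \<in> off ` {..<n}. z < s} \<union> {4 * E}) = off (Suc k)"
  proof (rule Min_eqI)
    show "finite ({s \<in> off ` {..<n}. z < s} \<union> {4 * E})" by simp
    show "off (Suc k) \<in> {s \<in> off ` {..<n}. z < s} \<union> {4 * E}"
    proof (cases "Suc k = n")
      case True then show ?thesis using offn by simp
    next
      case False then have "Suc k < n" using k by simp
      then show ?thesis using z by auto
    qed
    fix y assume "y \<in> {s \<in> off ` {..<n}. z < s} \<union> {4 * E}"
    then show "off (Suc k) \<le> y"
    proof
      assume "y \<in> {s \<in> off ` {..<n}. z < s}"
      then obtain j where j: "j < n" "y = off j" "z < off j" by auto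
      have "k < j"
      proof (rule ccontr)
        assume "\<not> k < j"
        then have "off j \<le> off k" using mono' k by simp
        then show False using j z by simp
      qed
      then show ?thesis using mono' j by simp
    next
      assume "y \<in> {4 * E}"
      then show ?thesis using offn mono'[of "Suc k" n] k by simp
    qed
  qed
qed

definition Ev :: "nat \<Rightarrow> nat set" where "Ev E = (\<lambda>j. 2 * j) ` {..<2 * E}"

definition Bset :: "nat \<Rightarrow> fmap set" where
  "Bset E = {N. fst N = E \<and> tau2 N = std E \<and> (\<exists>S. S \<subseteq> Ev E \<and> tau1 N = blk E S) \<and> t0ok E (tau0 N)}"

lemma fmap_eta: "N = (fst N, tau0 N, tau1 N, tau2 N)"
  by (simp add: tau0_def tau1_def tau2_def)

lemma Bset_sub: "Bset E \<subseteq> (\<lambda>(S, t). (E, t, blk E S, std E)) ` (Pow (Ev E) \<times> {t. t0ok E t})"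
proof
  fix N assume "N \<in> Bset E"
  then obtain S where "fst N = E" "tau2 N = std E" "S \<subseteq> Ev E" "tau1 N = blk E S" "t0ok E (tau0 N)"
    unfolding Bset_def by auto
  then show "N \<in> (\<lambda>(S, t). (E, t, blk E S, std E)) ` (Pow (Ev E) \<times> {t. t0ok E t})"
    using fmap_eta[of N] by (auto intro!: image_eqI[of _ _ "(S, tau0 N)"])
qed

lemma card_Ev: "card (Ev E) = 2 * E"
  unfolding Ev_def by (simp add: card_image inj_on_def)

lemma finite_Ev: "finite (Ev E)" by (simp add: Ev_def)

lemma finite_Bset: "finite (Bset E)"
  by (rule finite_subset[OF Bset_sub]) (auto simp: finite_t0ok Ev_def)

lemma card_Bset: assumes "E > 0" shows "card (Bset E) \<le> 4 ^ E * (4 ^ E * (4 * E) ^ E)"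
proof -
  have "card (Bset E) \<le> card ((\<lambda>(S, t). (E, t, blk E S, std E)) ` (Pow (Ev E) \<times> {t. t0ok E t}))"
    by (rule card_mono[OF _ Bset_sub]) (auto simp: finite_t0ok Ev_def)
  also have "\<dots> \<le> card (Pow (Ev E) \<times> {t. t0ok E t})" by (rule card_image_le) (auto simp: finite_t0ok Ev_def)
  also have "\<dots> = 2 ^ (2 * E) * card {t. t0ok E t}"
    using card_Pow[OF finite_Ev] card_Ev by (simp add: card_cartesian_product)
  also have "\<dots> \<le> 2 ^ (2 * E) * (4 ^ E * (4 * E) ^ E)" using card_t0ok[OF assms] by simp
  finally show ?thesis by (simp add: power_mult)
qed

locale umap =
  fixes M :: fmap
  assumes ism: "is_map M" and Epos: "fst M > 0"
begin

abbreviation "E \<equiv> fst M"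
abbreviation "F \<equiv> flags M"

lemma F_eq: "F = {..<4 * E}" by (simp add: flags_def)

lemma fpf0: "fpf_involution_on F (tau0 M)" and fpf1: "fpf_involution_on F (tau1 M)"
  and fpf2: "fpf_involution_on F (tau2 M)"
  and comm02: "\<And>x. tau0 M (tau2 M x) = tau2 M (tau0 M x)"
  and fp02: "\<And>x. x \<in> F \<Longrightarrow> tau0 M (tau2 M x) \<noteq> x"
  and conn: "num_orbits F [tau0 M, tau1 M, tau2 M] = 1"
  using ism Epos unfolding is_map_def by auto

lemma invol: assumes "fpf_involution_on F t" shows "\<And>y. t (t y) = y" "\<And>y. y \<in> F \<Longrightarrow> t y \<noteq> y"
  "\<And>y. y \<in> F \<Longrightarrow> t y \<in> F"
  using assms unfolding fpf_involution_on_def by (metis)+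

lemma finF: "finite F" by (simp add: flags_def)

sublocale D: dih F "tau2 M" "tau1 M"
  by unfold_locales (auto simp: finF invol[OF fpf1] invol[OF fpf2])

definition R :: "(nat \<times> nat) set" where "R = orbit_rel F [tau1 M, tau2 M]"

lemma R_sym: assumes "(x, y) \<in> R" shows "(y, x) \<in> R"
proof -
  let ?G = "{(x, t x) | x t. x \<in> F \<and> t \<in> set [tau1 M, tau2 M]}"
  have "(x, y) \<in> ?G\<^sup>*" using assms unfolding R_def orbit_rel_def by simp
  then have "(y, x) \<in> ?G\<^sup>*"
  proof (induction rule: rtrancl_induct)
    case base then show ?case by simp
  next
    case (step y z)
    from step(2) obtain t where t: "t = tau1 M \<or> t = tau2 M" "y \<in> F" "z = t y" by auto
    then have "t z = y" "z \<in> F" using invol[OF fpf1] invol[OF fpf2] by auto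
    then have "(z, y) \<in> ?G" using t by force
    then show ?case using step(3) by (rule converse_rtrancl_into_rtrancl)
  qed
  then show ?thesis unfolding R_def orbit_rel_def by simp
qed

lemma R_trans: "(x, y) \<in> R \<Longrightarrow> (y, z) \<in> R \<Longrightarrow> (x, z) \<in> R"
  unfolding R_def orbit_rel_def by (rule rtrancl_trans)

definition cls :: "nat \<Rightarrow> nat set" where "cls y = R `` {y}"

lemma cls_eq: "(x, y) \<in> R \<Longrightarrow> cls x = cls y"
  unfolding cls_def using R_sym R_trans by blast

lemma cls_W: "x \<in> F \<Longrightarrow> cls x = D.W x"
  unfolding cls_def R_def by (rule D.orbit_W)

lemma self_cls: "y \<in> cls y"
  unfolding cls_def R_def orbit_rel_def by simp

definition V :: "nat set set" where "V = F // R"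

lemma V_iff: "C \<in> V \<longleftrightarrow> (\<exists>x\<in>F. C = cls x)"
  unfolding V_def quotient_def cls_def by auto

lemma cls_V: "x \<in> F \<Longrightarrow> cls x \<in> V" using V_iff by auto

definition bs :: "nat set \<Rightarrow> nat" where "bs C = (SOME y. y \<in> F \<and> C = cls y)"

lemma bs: assumes "C \<in> V" shows "bs C \<in> F" "cls (bs C) = C"
proof -
  have "\<exists>y. y \<in> F \<and> C = cls y" using assms V_iff by auto
  then have "bs C \<in> F \<and> C = cls (bs C)" unfolding bs_def by (rule someI_ex)
  then show "bs C \<in> F" "cls (bs C) = C" by auto
qed

definition enum :: "nat set \<Rightarrow> nat \<Rightarrow> nat" where "enum C i = D.w (bs C) i"

lemma C_W: "C \<in> V \<Longrightarrow> C = enum C ` {..<card C}"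
  using bs cls_W D.W_card unfolding enum_def D.W_def by metis

lemma card_C: "C \<in> V \<Longrightarrow> card C = D.per (bs C)"
  using bs cls_W D.W_card by metis

lemma card_C_even: "C \<in> V \<Longrightarrow> even (card C)"
  using card_C bs D.per_even by metis

lemma card_C_pos: "C \<in> V \<Longrightarrow> card C > 0"
  using card_C bs D.per by metis

lemma card_C_ge2: "C \<in> V \<Longrightarrow> card C \<ge> 2"
  using card_C_even card_C_pos by (metis One_nat_def Suc_leI dvd_imp_le le_neq_implies_less 
      less_2_cases_iff odd_one zero_less_numeral)

lemma enum_inj: "C \<in> V \<Longrightarrow> inj_on (enum C) {..<card C}"
  using card_C bs D.w_inj unfolding enum_def by metis

lemma enum_in: "C \<in> V \<Longrightarrow> enum C i \<in> F"
  using bs D.w_in unfolding enum_def by metis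

lemma C_sub: assumes "C \<in> V" shows "C \<subseteq> F"
proof
  fix x assume "x \<in> C"
  then obtain i where "x = enum C i" using C_W[OF assms] by (metis imageE)
  then show "x \<in> F" using enum_in[OF assms] by simp
qed

lemma cls_enum: assumes "C \<in> V" "i < card C" shows "cls (enum C i) = C"
proof -
  have "enum C i \<in> C" using C_W[OF assms(1)] assms(2) by blast
  then have "(bs C, enum C i) \<in> R" using bs[OF assms(1)] unfolding cls_def by blast
  then show ?thesis using cls_eq bs[OF assms(1)] by metis
qed

definition pos :: "nat \<Rightarrow> nat" where
  "pos y = inv_into {..<card (cls y)} (enum (cls y)) y"

lemma pos: assumes "y \<in> F"
  shows "pos y < card (cls y)" "enum (cls y) (pos y) = y"
proof -
  have C: "cls y \<in> V" using cls_V assms .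
  have m: "y \<in> enum (cls y) ` {..<card (cls y)}" using C_W[OF C] self_cls by blast
  show "pos y < card (cls y)" unfolding pos_def using inv_into_into[OF m] by simp
  show "enum (cls y) (pos y) = y" unfolding pos_def using f_inv_into_f[OF m] .
qed

lemma pos_enum: assumes "C \<in> V" "i < card C" shows "pos (enum C i) = i"
  unfolding pos_def cls_enum[OF assms] using enum_inj[OF assms(1)] assms(2)
  by (simp add: inv_into_f_f)

lemma t2_enum: "tau2 M (enum C i) = (if even i then enum C (Suc i) else enum C (i - 1))"
  unfolding enum_def by (rule D.a_w)

lemma t1_enum: assumes "C \<in> V" "i < card C"
  shows "tau1 M (enum C i) = (if odd i then (if Suc i = card C then enum C 0 else enum C (Suc i))
                      else (if i = 0 then enum C (card C - 1) else enum C (i - 1)))"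
  using D.b_w[of "bs C" i] bs[OF assms(1)] card_C[OF assms(1)] assms(2)
  unfolding enum_def by simp

lemma sum_card_V: "(\<Sum>C\<in>V. card C) = 4 * E"
proof -
  have U: "\<Union>V = F"
  proof
    show "\<Union>V \<subseteq> F" using C_sub by blast
    show "F \<subseteq> \<Union>V" using cls_V self_cls by blast
  qed
  have "pairwise disjnt V"
  proof (rule pairwiseI)
    fix C C' assume C: "C \<in> V" and C': "C' \<in> V" and ne: "C \<noteq> C'"
    show "disjnt C C'"
    proof (rule ccontr)
      assume "\<not> disjnt C C'"
      then obtain y where "y \<in> C" "y \<in> C'" unfolding disjnt_def by auto
      moreover obtain x x' where "C = cls x" "C' = cls x'" using C C' V_iff by auto
      ultimately have "cls x = cls y" "cls x' = cls y" using cls_eq unfolding cls_def by auto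
      then show False using ne \<open>C = cls x\<close> \<open>C' = cls x'\<close> by simp
    qed
  qed
  then have "card (\<Union>V) = sum card V"
    using card_Union_disjoint C_sub finF finite_subset by metis
  then show ?thesis using U F_eq by simp
qed

lemma V_img: "V = cls ` F"
  unfolding V_def quotient_def cls_def by auto

lemma finV: "finite V"
  unfolding V_img using finF by simp

definition off :: "nat set list \<Rightarrow> nat \<Rightarrow> nat" where
  "off xs k = (\<Sum>j<k. card (xs ! j))"

definition idx :: "nat set list \<Rightarrow> nat \<Rightarrow> nat" where
  "idx xs y = (LEAST k. k < length xs \<and> xs ! k = cls y)"

definition sg :: "nat set list \<Rightarrow> nat \<Rightarrow> nat" where
  "sg xs y = off xs (idx xs y) + pos y"

context
  fixes xs assumes xs: "xs \<in> permutations_of_set V"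
begin

lemma xs_set: "set xs = V" and xs_dist: "distinct xs" and xs_len: "length xs = card V"
  using xs permutations_of_setD length_finite_permutations_of_set by auto

lemma xs_V: "k < length xs \<Longrightarrow> xs ! k \<in> V"
  using xs_set nth_mem by blast

lemma off_Suc: "off xs (Suc k) = off xs k + card (xs ! k)"
  by (simp add: off_def)

lemma off_mono: "i < j \<Longrightarrow> j \<le> length xs \<Longrightarrow> off xs i < off xs j"
proof (induction j)
  case 0 then show ?case by simp
next
  case (Suc j)
  have "card (xs ! j) > 0" using card_C_pos xs_V Suc by simp
  then show ?case using Suc by (cases "i = j") (auto simp: off_Suc)
qed

lemma off_even: "k \<le> length xs \<Longrightarrow> even (off xs k)"
  by (induction k) (auto simp: off_Suc off_def[of _ 0] card_C_even xs_V)

lemma off_len: "off xs (length xs) = 4 * E"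
proof -
  have "off xs (length xs) = sum_list (map card xs)"
    by (simp add: off_def sum_list_sum_nth atLeast0LessThan)
  also have "\<dots> = (\<Sum>C\<in>V. card C)" using xs_dist xs_set sum_list_distinct_conv_sum_set by metis
  finally show ?thesis using sum_card_V by simp
qed

lemma idx: assumes "y \<in> F" shows "idx xs y < length xs" "xs ! idx xs y = cls y"
proof -
  have "cls y \<in> set xs" using xs_set cls_V assms by simp
  then obtain k where "k < length xs" "xs ! k = cls y" by (metis in_set_conv_nth)
  then have "\<exists>k. k < length xs \<and> xs ! k = cls y" by blast
  then show "idx xs y < length xs" "xs ! idx xs y = cls y"
    unfolding idx_def using LeastI_ex[of "\<lambda>k. k < length xs \<and> xs ! k = cls y"] by auto
qed

lemma idx_unique: assumes "y \<in> F" "k < length xs" "xs ! k = cls y" shows "idx xs y = k"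
  using idx[OF assms(1)] assms xs_dist nth_eq_iff_index_eq by metis

lemma sg_bounds: assumes "y \<in> F"
  shows "off xs (idx xs y) \<le> sg xs y" "sg xs y < off xs (Suc (idx xs y))"
  using pos[OF assms] idx[OF assms] by (auto simp: sg_def off_Suc)

lemma sg_lt: assumes "y \<in> F" shows "sg xs y < 4 * E"
proof -
  have "Suc (idx xs y) \<le> length xs" using idx[OF assms] by simp
  then have "off xs (Suc (idx xs y)) \<le> off xs (length xs)"
    using off_mono[of "Suc (idx xs y)" "length xs"] by (cases "Suc (idx xs y) = length xs") auto
  then show ?thesis using sg_bounds[OF assms] off_len by simp
qed

lemma block_unique: assumes "j < length xs" "k < length xs"
  "off xs j \<le> z" "z < off xs (Suc j)" "off xs k \<le> z" "z < off xs (Suc k)"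
  shows "j = k"
proof (rule ccontr)
  assume "j \<noteq> k"
  then consider "j < k" | "k < j" by linarith
  then show False
  proof cases
    case 1
    then have "off xs (Suc j) \<le> off xs k" using off_mono[of "Suc j" k] assms by (cases "Suc j = k") auto
    then show False using assms by simp
  next
    case 2
    then have "off xs (Suc k) \<le> off xs j" using off_mono[of "Suc k" j] assms by (cases "Suc k = j") auto
    then show False using assms by simp
  qed
qed

lemma sg_inj: "inj_on (sg xs) F"
proof (rule inj_onI)
  fix y y' assume y: "y \<in> F" and y': "y' \<in> F" and e: "sg xs y = sg xs y'"
  have k: "idx xs y = idx xs y'"
    apply (rule block_unique[of _ _ "sg xs y"])
    using idx(1)[OF y] idx(1)[OF y'] sg_bounds[OF y] sg_bounds[OF y'] e by auto
  then have c: "cls y = cls y'" using idx(2)[OF y] idx(2)[OF y'] by simp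
  have "pos y = pos y'" using e k by (simp add: sg_def)
  then show "y = y'" using pos(2)[OF y] pos(2)[OF y'] c by metis
qed

lemma sg_bij: "bij_betw (sg xs) F {..<4 * E}"
proof -
  have sub: "sg xs ` F \<subseteq> {..<4 * E}" using sg_lt by auto
  have "card (sg xs ` F) = card {..<4 * E}" using card_image[OF sg_inj] F_eq by simp
  then have "sg xs ` F = {..<4 * E}" using card_subset_eq[OF _ sub] by simp
  then show ?thesis using sg_inj unfolding bij_betw_def by simp
qed

lemma sg_enum: assumes "k < length xs" "i < card (xs ! k)"
  shows "sg xs (enum (xs ! k) i) = off xs k + i"
proof -
  have C: "xs ! k \<in> V" using xs_V assms(1) .
  have y: "enum (xs ! k) i \<in> F" using enum_in[OF C] .
  have "cls (enum (xs ! k) i) = xs ! k" using cls_enum[OF C assms(2)] .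
  then have "idx xs (enum (xs ! k) i) = k" using idx_unique[OF y assms(1)] by simp
  then show ?thesis using pos_enum[OF C assms(2)] by (simp add: sg_def)
qed

lemma sg_t2: assumes "y \<in> F" shows "sg xs (tau2 M y) = std E (sg xs y)"
proof -
  define k where "k = idx xs y"
  define C where "C = xs ! k"
  define i where "i = pos y"
  have k: "k < length xs" and C: "C = cls y" using idx[OF assms] k_def C_def by auto
  have CV: "C \<in> V" using C cls_V assms by simp
  have i: "i < card C" and y: "y = enum C i" using pos[OF assms] C i_def by auto
  have ev: "even (off xs k)" using off_even k by simp
  have sgy: "sg xs y = off xs k + i" using sg_enum[OF k, of i] i y C_def by simp
  have lt: "sg xs y < 4 * E" using sg_lt[OF assms] .
  show ?thesis
  proof (cases "even i")
    case True
    have "Suc i \<noteq> card C" using True card_C_even[OF CV] by (metis even_Suc)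
    then have si: "Suc i < card C" using i by simp
    have "sg xs (tau2 M y) = off xs k + Suc i"
      using t2_enum[of C i] True y sg_enum[OF k si[unfolded C_def]] C_def by simp
    then show ?thesis using True ev lt sgy by (simp add: std_def)
  next
    case False
    then have i0: "i - 1 < card C" "i > 0" using i by (auto intro: odd_pos)
    have "sg xs (tau2 M y) = off xs k + (i - 1)"
      using t2_enum[of C i] False y sg_enum[OF k i0(1)[unfolded C_def]] C_def by simp
    then show ?thesis using False ev lt sgy i0 by (simp add: std_def)
  qed
qed

definition SS :: "nat set" where "SS = off xs ` {..<length xs}"

lemma SS_Ev: "SS \<subseteq> Ev E"
proof
  fix z assume "z \<in> SS"
  then obtain k where k: "k < length xs" "z = off xs k" unfolding SS_def by auto
  have "even z" using off_even k by simp
  moreover have "z < 4 * E" using off_mono[of k "length xs"] off_len k by simp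
  ultimately show "z \<in> Ev E" unfolding Ev_def by (auto elim!: evenE)
qed

lemma sg_t1: assumes "y \<in> F" shows "sg xs (tau1 M y) = blk E SS (sg xs y)"
proof -
  define k where "k = idx xs y"
  define C where "C = xs ! k"
  define i where "i = pos y"
  have k: "k < length xs" and C: "C = cls y" using idx[OF assms] k_def C_def by auto
  have CV: "C \<in> V" using C cls_V assms by simp
  have i: "i < card C" and y: "y = enum C i" using pos[OF assms] C i_def by auto
  have ev: "even (off xs k)" using off_even k by simp
  have sgy: "sg xs y = off xs k + i" using sg_enum[OF k, of i] i y C_def by simp
  have lt: "sg xs y < 4 * E" using sg_lt[OF assms] .
  have offS: "off xs (Suc k) = off xs k + card C" using off_Suc C_def by simp
  have Mx: "Max {s \<in> SS. s \<le> sg xs y} = off xs k"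
    and Mn: "Min ({s \<in> SS. sg xs y < s} \<union> {4 * E}) = off xs (Suc k)"
    using blk_at[of "length xs" "off xs" E k "sg xs y", OF off_mono off_len k] sgy i offS
    unfolding SS_def by auto
  have B: "blk E SS (sg xs y) = (if even i then (if i = 0 then off xs k + card C - 1 else off xs k + i - 1)
         else (if Suc i = card C then off xs k else Suc (off xs k + i)))"
    unfolding blk_def Let_def using lt Mx Mn sgy offS ev by auto
  have se: "sg xs (enum C j) = off xs k + j" if "j < card C" for j
    using sg_enum[OF k, of j] that C_def by simp
  have c2: "card C \<ge> 2" using card_C_ge2[OF CV] .
  show ?thesis
  proof (cases "odd i")
    case True
    show ?thesis
    proof (cases "Suc i = card C")
      case True
      then show ?thesis using t1_enum[OF CV i] \<open>odd i\<close> y B se[of 0] c2 by simp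
    next
      case False
      then have "Suc i < card C" using i by simp
      then show ?thesis using t1_enum[OF CV i] \<open>odd i\<close> y B se[of "Suc i"] False by simp
    qed
  next
    case False
    show ?thesis
    proof (cases "i = 0")
      case True
      then show ?thesis using t1_enum[OF CV i] False y B se[of "card C - 1"] c2 by simp
    next
      case F2: False
      then show ?thesis using t1_enum[OF CV i] False y B se[of "i - 1"] i by simp
    qed
  qed
qed

abbreviation "NN \<equiv> tr (sg xs) M"

lemma NN_iso: "(M, NN) \<in> map_iso"
  using tr_iso sg_bij by simp

lemma NN_t: assumes "y \<in> F"
  shows "tau0 NN (sg xs y) = sg xs (tau0 M y)" "tau1 NN (sg xs y) = sg xs (tau1 M y)"
    "tau2 NN (sg xs y) = sg xs (tau2 M y)"
  using cj_at[OF sg_bij assms] by (simp_all add: tr_simps)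

lemma NN_out: assumes "\<not> z < 4 * E"
  shows "tau0 NN z = z" "tau1 NN z = z" "tau2 NN z = z"
  using cj_out[OF assms] by (simp_all add: tr_simps)

lemma surj_sg: assumes "z < 4 * E" obtains y where "y \<in> F" "z = sg xs y"
  using sg_bij assms unfolding bij_betw_def by auto

lemma NN_B: "NN \<in> Bset E"
proof -
  have t2: "tau2 NN = std E"
  proof
    fix z show "tau2 NN z = std E z"
    proof (cases "z < 4 * E")
      case True
      then obtain y where "y \<in> F" "z = sg xs y" by (rule surj_sg)
      then show ?thesis using NN_t sg_t2 by simp
    next
      case False then show ?thesis using NN_out by (simp add: std_def)
    qed
  qed
  have t1: "tau1 NN = blk E SS"
  proof
    fix z show "tau1 NN z = blk E SS z"
    proof (cases "z < 4 * E")
      case True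
      then obtain y where "y \<in> F" "z = sg xs y" by (rule surj_sg)
      then show ?thesis using NN_t sg_t1 by simp
    next
      case False then show ?thesis using NN_out by (simp add: blk_def)
    qed
  qed
  have i0: "fpf_involution_on {..<4 * E} (tau0 NN)"
    unfolding fpf_involution_on_def
  proof (intro conjI ballI allI impI)
    fix z assume "z \<in> {..<4 * E}"
    then obtain y where y: "y \<in> F" "z = sg xs y" using surj_sg by auto
    have ty: "tau0 M y \<in> F" using invol(3)[OF fpf0 y(1)] .
    show "tau0 NN z \<in> {..<4 * E}" using y ty NN_t sg_lt by simp
    show "tau0 NN (tau0 NN z) = z" using y ty NN_t invol(1)[OF fpf0] by simp
    show "tau0 NN z \<noteq> z" using y ty NN_t invol(2)[OF fpf0 y(1)] sg_inj inj_on_eq_iff by metis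
  next
    fix z assume "z \<notin> {..<4 * E}" then show "tau0 NN z = z" using NN_out by simp
  qed
  have c: "\<forall>z<4 * E. tau0 NN (std E z) = std E (tau0 NN z)"
  proof (intro allI impI)
    fix z assume "z < 4 * E"
    then obtain y where y: "y \<in> F" "z = sg xs y" using surj_sg by auto
    have ty: "tau0 M y \<in> F" "tau2 M y \<in> F" using invol(3)[OF fpf0 y(1)] invol(3)[OF fpf2 y(1)] by auto
    have "tau0 NN (std E z) = tau0 NN (tau2 NN z)" using t2 by simp
    also have "\<dots> = sg xs (tau0 M (tau2 M y))" using y ty NN_t by simp
    also have "\<dots> = sg xs (tau2 M (tau0 M y))" using comm02 by simp
    also have "\<dots> = tau2 NN (tau0 NN z)" using y ty NN_t by simp
    finally show "tau0 NN (std E z) = std E (tau0 NN z)" using t2 by simp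
  qed
  have f: "\<forall>z<4 * E. tau0 NN (std E z) \<noteq> z"
  proof (intro allI impI)
    fix z assume "z < 4 * E"
    then obtain y where y: "y \<in> F" "z = sg xs y" using surj_sg by auto
    have ty: "tau0 M y \<in> F" "tau2 M y \<in> F" "tau0 M (tau2 M y) \<in> F"
      using invol(3)[OF fpf0 y(1)] invol(3)[OF fpf2 y(1)] invol(3)[OF fpf0 invol(3)[OF fpf2 y(1)]] by auto
    have "tau0 NN (std E z) = sg xs (tau0 M (tau2 M y))" using t2 y ty NN_t by simp
    then show "tau0 NN (std E z) \<noteq> z" using y ty fp02 sg_inj inj_on_eq_iff by metis
  qed
  show ?thesis unfolding Bset_def t0ok_def using t1 t2 SS_Ev i0 c f by (auto simp: tr_simps)
qed

end

lemma zero_F: "0 \<in> F" using Epos F_eq by simp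

lemma conn_closed: assumes "A \<subseteq> F" "0 \<in> A"
  and cl: "\<And>y. y \<in> A \<Longrightarrow> tau0 M y \<in> A \<and> tau1 M y \<in> A \<and> tau2 M y \<in> A"
  shows "A = F"
proof -
  let ?G = "orbit_rel F [tau0 M, tau1 M, tau2 M]"
  have "card (F // ?G) = 1" using conn unfolding num_orbits_def .
  then obtain C where C: "F // ?G = {C}" using card_1_singletonE by blast
  have "F \<subseteq> A"
  proof
    fix y assume y: "y \<in> F"
    have "?G `` {y} = C" "?G `` {0} = C" using C y zero_F unfolding quotient_def by auto
    moreover have "y \<in> ?G `` {y}" unfolding orbit_rel_def by simp
    ultimately have "(0, y) \<in> {(x, t x) | x t. x \<in> F \<and> t \<in> set [tau0 M, tau1 M, tau2 M]}\<^sup>*"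
      unfolding orbit_rel_def by auto
    then show "y \<in> A"
    proof (induction rule: rtrancl_induct)
      case base then show ?case using assms(2) .
    next
      case (step u v) then show ?case using cl by auto
    qed
  qed
  then show ?thesis using assms(1) by auto
qed

lemma sg_inj_xs: assumes xs: "xs \<in> permutations_of_set V" and xs': "xs' \<in> permutations_of_set V"
  and eqN: "tr (sg xs) M = tr (sg xs') M" and e0: "sg xs 0 = sg xs' 0"
  shows "xs = xs'"
proof -
  let ?A = "{y \<in> F. sg xs y = sg xs' y}"
  have A: "?A = F"
  proof (rule conn_closed)
    show "?A \<subseteq> F" by auto
    show "0 \<in> ?A" using e0 zero_F by simp
    fix y assume y: "y \<in> ?A"
    then have yF: "y \<in> F" by simp
    have "sg xs (tau0 M y) = sg xs' (tau0 M y)"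
      using NN_t(1)[OF xs yF] NN_t(1)[OF xs' yF] eqN y by simp
    moreover have "sg xs (tau1 M y) = sg xs' (tau1 M y)"
      using NN_t(2)[OF xs yF] NN_t(2)[OF xs' yF] eqN y by simp
    moreover have "sg xs (tau2 M y) = sg xs' (tau2 M y)"
      using NN_t(3)[OF xs yF] NN_t(3)[OF xs' yF] eqN y by simp
    ultimately show "tau0 M y \<in> ?A \<and> tau1 M y \<in> ?A \<and> tau2 M y \<in> ?A"
      using invol(3)[OF fpf0 yF] invol(3)[OF fpf1 yF] invol(3)[OF fpf2 yF] by simp
  qed
  have len: "length xs = length xs'" using xs_len[OF xs] xs_len[OF xs'] by simp
  have "\<forall>k<length xs. xs ! k = xs' ! k"
  proof (intro allI)
    fix k show "k < length xs \<longrightarrow> xs ! k = xs' ! k"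
    proof (induction k rule: less_induct)
      case (less k)
      show ?case
      proof
        assume k: "k < length xs"
        have offeq: "off xs k = off xs' k"
          unfolding off_def using less k by (intro sum.cong) auto
        have CV: "xs ! k \<in> V" using xs_V[OF xs k] .
        have c0: "0 < card (xs ! k)" using card_C_pos[OF CV] .
        define y where "y = enum (xs ! k) 0"
        have yF: "y \<in> F" using enum_in[OF CV] y_def by simp
        have "sg xs y = off xs k" using sg_enum[OF xs k c0] y_def by simp
        moreover have "sg xs' y = off xs' (idx xs' y)"
          using pos_enum[OF CV c0] y_def by (simp add: sg_def)
        moreover have "sg xs y = sg xs' y" using A yF by blast
        ultimately have oe: "off xs' (idx xs' y) = off xs' k" using offeq by simp
        have il: "idx xs' y < length xs'" using idx(1)[OF xs' yF] .
        have "idx xs' y = k"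
        proof (rule ccontr)
          assume "idx xs' y \<noteq> k"
          then consider "idx xs' y < k" | "k < idx xs' y" by linarith
          then show False
            using off_mono[OF xs', of "idx xs' y" k] off_mono[OF xs', of k "idx xs' y"] oe il k len
            by cases auto
        qed
        then have "xs' ! k = cls y" using idx(2)[OF xs' yF] by simp
        also have "\<dots> = xs ! k" using cls_enum[OF CV c0] y_def by simp
        finally show "xs ! k = xs' ! k" by simp
      qed
    qed
  qed
  then show ?thesis using len by (simp add: nth_equalityI)
qed

definition NS :: "fmap set" where
  "NS = (\<lambda>xs. tr (sg xs) M) ` permutations_of_set V"

lemma NS_B: "NS \<subseteq> Bset E"
  unfolding NS_def using NN_B by auto

lemma NS_iso: "N \<in> NS \<Longrightarrow> (M, N) \<in> map_iso"
  unfolding NS_def using NN_iso by auto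

lemma NS_card: "fact (card V) \<le> 4 * E * card NS"
proof -
  let ?f = "\<lambda>xs. (tr (sg xs) M, sg xs 0)"
  have inj: "inj_on ?f (permutations_of_set V)"
    by (rule inj_onI) (use sg_inj_xs in auto)
  have sub: "?f ` permutations_of_set V \<subseteq> NS \<times> {..<4 * E}"
    unfolding NS_def using sg_lt zero_F by auto
  have finNS: "finite NS" unfolding NS_def by simp
  have "fact (card V) = card (permutations_of_set V)" using finV by simp
  also have "\<dots> = card (?f ` permutations_of_set V)" using card_image[OF inj] by simp
  also have "\<dots> \<le> card (NS \<times> {..<4 * E})" by (rule card_mono[OF _ sub]) (use finNS in simp)
  also have "\<dots> = card NS * (4 * E)" by (simp add: card_cartesian_product)
  finally show ?thesis by (simp add: mult.commute)
qed

end

lemma pow_le_exp_fact: "real m ^ m \<le> exp (real m) * fact m"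
proof -
  have s: "(\<lambda>k. real m ^ k / fact k) sums exp (real m)"
    using exp_converges[of "real m"] by (simp add: divide_inverse mult.commute)
  have "sum (\<lambda>k. real m ^ k / fact k) {m} \<le> (\<Sum>k. real m ^ k / fact k)"
    by (rule sum_le_suminf) (use s sums_summable in auto)
  then have "real m ^ m / fact m \<le> exp (real m)" using sums_unique[OF s] by simp
  then show ?thesis by (simp add: divide_le_eq mult.commute)
qed

lemma fact_le_pow: "n \<le> m \<Longrightarrow> fact m \<le> (fact n :: nat) * m ^ (m - n)"
proof (induction m)
  case 0 then show ?case by simp
next
  case (Suc m)
  show ?case
  proof (cases "n = Suc m")
    case True then show ?thesis by simp
  next
    case False
    then have nm: "n \<le> m" using Suc by simp
    have "fact (Suc m) = Suc m * fact m" by simp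
    also have "\<dots> \<le> Suc m * (fact n * m ^ (m - n))" by (rule mult_le_mono2) (rule Suc.IH[OF nm])
    also have "\<dots> \<le> Suc m * (fact n * Suc m ^ (m - n))"
      by (intro mult_le_mono2 mult_le_mono2 power_mono) auto
    also have "\<dots> = fact n * Suc m ^ (Suc m - n)" using nm
      by (simp add: Suc_diff_le algebra_simps)
    finally show ?thesis .
  qed
qed

lemma fact_le_h: assumes "n \<ge> 1" "m = n + h - 1" "m \<ge> 1"
  shows "fact m \<le> (fact n :: nat) * m ^ h"
proof (cases "h = 0")
  case True
  then have "m \<le> n" using assms by simp
  then show ?thesis using True fact_mono_nat by simp
next
  case False
  then have nm: "n \<le> m" using assms by simp
  have "fact m \<le> fact n * m ^ (m - n)" by (rule fact_le_pow[OF nm])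
  also have "\<dots> \<le> fact n * m ^ h"
    using assms by (intro mult_le_mono2 power_increasing) auto
  finally show ?thesis .
qed

lemma pow_h_le: assumes "h \<le> m" shows "real m ^ h \<le> exp (real m) * real h ^ h"
proof (cases "h = 0")
  case True then show ?thesis by simp
next
  case False
  define x where "x = (real m - real h) / real h"
  have x0: "x \<ge> 0" using assms False by (simp add: x_def)
  have mx: "real m = real h * (1 + x)" using False by (simp add: x_def field_simps)
  have "(1 + x) ^ h \<le> exp x ^ h"
    by (rule power_mono) (use x0 in auto)
  also have "\<dots> = exp (real h * x)" by (simp add: exp_of_nat_mult)
  also have "\<dots> \<le> exp (real m)"
  proof -
    have "real h * x \<le> real m" using mx by (simp add: distrib_left)
    then show ?thesis by simp
  qed
  finally have "(1 + x) ^ h \<le> exp (real m)" .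
  then have "real h ^ h * (1 + x) ^ h \<le> real h ^ h * exp (real m)"
    by (intro mult_left_mono) auto
  then show ?thesis using mx by (simp add: power_mult_distrib mult.commute)
qed

lemma s_le: "exp (1/2 :: real) \<le> 7/4"
proof -
  have "exp (1/2 :: real) ^ 2 = exp 1" by (simp add: exp_of_nat_mult[symmetric])
  also have "\<dots> \<le> 3" by (rule exp_le)
  also have "\<dots> \<le> (7/4) ^ 2" by (simp add: power2_eq_square)
  finally have "exp (1/2 :: real) ^ 2 \<le> (7/4) ^ 2" .
  then show ?thesis by (rule power2_le_imp_le) simp
qed

lemma m_s_le: "real m * exp (1/2) ^ m \<le> 32 * 2 ^ m"
proof -
  have "real m * exp (1/2) ^ m \<le> real m * (7/4) ^ m"
    by (intro mult_left_mono power_mono s_le) auto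
  also have "\<dots> \<le> 32 * (8/7) ^ m * (7/4) ^ m"
  proof (intro mult_right_mono)
    have "1 + real m * (1/7) \<le> (1 + 1/7) ^ m" by (rule Bernoulli_inequality) simp
    then show "real m \<le> 32 * (8/7) ^ m" by simp
  qed simp
  also have "\<dots> = 32 * 2 ^ m" by (simp add: power_mult_distrib[symmetric])
  finally show ?thesis .
qed

lemma analytic:
  fixes m n h q :: nat
  assumes n: "n \<ge> 1" and m: "m = n + h - 1" and m1: "m \<ge> 1"
    and key: "q * fact n \<le> 4 * m * (4 ^ m * (4 ^ m * (4 * m) ^ m))"
  shows "real q \<le> (2 ^ 7 * exp (3 / 2)) ^ (n + h) * real h ^ h"
proof -
  define s where "s = exp (1/2 :: real)"
  have s1: "s \<ge> 1" unfolding s_def by simp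
  have expm: "exp (real m) = s ^ (2 * m)"
    unfolding s_def by (simp add: exp_of_nat_mult[symmetric])
  have exp32: "exp (3/2) = s ^ 3"
    unfolding s_def by (simp add: exp_of_nat_mult[symmetric])
  have fn: "real (fact n) > 0" by simp
  have k1: "real q * fact n \<le> 4 * m * (64 ^ m * real m ^ m)"
  proof -
    have "real (q * fact n) \<le> real (4 * m * (4 ^ m * (4 ^ m * (4 * m) ^ m)))"
      using key by (simp only: of_nat_le_iff)
    moreover have e64: "(64::real) ^ m = 4 ^ m * 4 ^ m * 4 ^ m" by (simp add: power_mult_distrib[symmetric])
    ultimately show ?thesis by (simp add: power_mult_distrib mult_ac)
  qed
  have k2: "real m ^ m \<le> exp (real m) * (fact n * real m ^ h)"
  proof -
    have "real m ^ m \<le> exp (real m) * fact m" by (rule pow_le_exp_fact)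
    also have "(fact m :: real) = real (fact m)" by simp
    also have "\<dots> \<le> real (fact n * m ^ h)" using fact_le_h[OF n m m1] by (simp only: of_nat_le_iff)
    finally show ?thesis by simp
  qed
  have hm: "h \<le> m" using m n by simp
  have k3: "real m ^ h \<le> exp (real m) * real h ^ h" by (rule pow_h_le[OF hm])
  have "real q * fact n \<le> 4 * m * (64 ^ m * (exp (real m) * (fact n * real m ^ h)))"
    using k1 k2 by (smt (verit) mult_left_mono of_nat_0_le_iff zero_le_power)
  then have "real q \<le> 4 * m * (64 ^ m * (exp (real m) * real m ^ h))"
    using fn by (simp add: mult.assoc mult.left_commute[of "fact n"])
  also have "\<dots> \<le> 4 * m * (64 ^ m * (exp (real m) * (exp (real m) * real h ^ h)))"
    using k3 by (intro mult_left_mono) auto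
  also have "\<dots> = (4 * m * 64 ^ m * s ^ m) * s ^ (3 * m) * real h ^ h"
    using expm by (simp add: power_add[symmetric] mult_ac)
  also have "\<dots> \<le> (128 * 2 ^ m * 64 ^ m) * s ^ (3 * m) * real h ^ h"
  proof -
    have "4 * m * 64 ^ m * s ^ m = 4 * 64 ^ m * (real m * s ^ m)" by simp
    also have "\<dots> \<le> 4 * 64 ^ m * (32 * 2 ^ m)" using m_s_le[of m] unfolding s_def by simp
    finally show ?thesis using s1 by (intro mult_right_mono) auto
  qed
  also have "\<dots> \<le> (128 * 2 ^ m * 64 ^ m) * (s ^ (3 * m) * s ^ 3) * real h ^ h"
    using s1 by (intro mult_right_mono mult_left_mono) auto
  also have "\<dots> = (2 ^ 7 * exp (3 / 2)) ^ (n + h) * real h ^ h"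
  proof -
    have nh: "n + h = Suc m" using m n by simp
    have "(2 ^ 7 * exp (3 / 2) :: real) ^ (n + h) = 128 ^ Suc m * s ^ (3 * Suc m)"
      unfolding nh exp32 power_mult_distrib power_mult by simp
    also have "\<dots> = (128 * 2 ^ m * 64 ^ m) * (s ^ (3 * m) * s ^ 3)"
    proof -
      have p1: "s ^ (3 * Suc m) = s ^ (3 * m) * s ^ 3" by (metis mult_Suc_right power_add mult.commute)
      have p2: "(128::real) ^ Suc m = 128 * 2 ^ m * 64 ^ m" by (simp add: power_mult_distrib[symmetric])
      show ?thesis by (simp only: p1 p2)
    qed
    finally show ?thesis by simp
  qed
  finally show ?thesis .
qed

lemma map_cl: assumes "is_map M" "x \<in> flags M"
  shows "tau0 M x \<in> flags M \<and> tau1 M x \<in> flags M \<and> tau2 M x \<in> flags M"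
  using assms unfolding is_map_def fpf_involution_on_def by auto

lemma map_iso_refl: "(M, M) \<in> map_iso"
  unfolding map_iso_def by (auto intro!: exI[of _ id])

lemma classes_eq:
  assumes A: "is_map A" and B: "is_map B" and "(A, N) \<in> map_iso" "(B, N) \<in> map_iso"
  shows "map_iso `` {A} = map_iso `` {B}"
proof -
  have NA: "(N, A) \<in> map_iso" using map_iso_sym[OF assms(3)] map_cl[OF A] by blast
  have NB: "(N, B) \<in> map_iso" using map_iso_sym[OF assms(4)] map_cl[OF B] by blast
  have BA: "(B, A) \<in> map_iso" using map_iso_trans[OF assms(4) NA] .
  have AB: "(A, B) \<in> map_iso" using map_iso_trans[OF assms(3) NB] .
  show ?thesis using map_iso_trans[OF BA] map_iso_trans[OF AB] by auto
qed

theorem lemma10: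
  fixes n h :: nat
  assumes "n \<ge> 1" and "even h"
  shows "real (num_UMap n h) \<le> (2 ^ 7 * exp (3 / 2)) ^ (n + h) * real h ^ h"
proof -
  define E where "E = n + h - 1"
  define Q where "Q = UMap_reps n h // map_iso"
  have rep: "is_map M \<and> num_vertices M = n \<and> fst M = E" if "M \<in> UMap_reps n h" for M
  proof -
    have "is_map M" "num_vertices M = n" "num_faces M = 1" "euler_genus M = int h"
      using that unfolding UMap_reps_def in_N_def by auto
    then have "int (fst M) = int n + int h - 1"
      unfolding euler_genus_def num_edges_def by simp
    then have "fst M = E" unfolding E_def using assms(1) by simp
    then show ?thesis using \<open>is_map M\<close> \<open>num_vertices M = n\<close> by simp
  qed
  have Qeq: "Q = (\<lambda>M. map_iso `` {M}) ` UMap_reps n h"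
    unfolding Q_def quotient_def by auto
  show ?thesis
  proof (cases "E = 0")
    case True
    have all_eq: "x = y" if xQ: "x \<in> Q" and yQ: "y \<in> Q" for x y
    proof -
      obtain A where A: "A \<in> UMap_reps n h" "x = map_iso `` {A}" using xQ Qeq by blast
      obtain B where B: "B \<in> UMap_reps n h" "y = map_iso `` {B}" using yQ Qeq by blast
      have fA: "fst A = 0" "fst B = 0" using rep[OF A(1)] rep[OF B(1)] True by auto
      have "(A, B) \<in> map_iso"
        unfolding map_iso_def using fA by (auto simp: flags_def bij_betw_def)
      then show "x = y" using classes_eq[of A B B] rep[OF A(1)] rep[OF B(1)] map_iso_refl A B
        by auto
    qed
    have cQ: "card Q \<le> 1"
    proof (cases "Q = {}")
      case True then show ?thesis by simp
    next
      case False
      then obtain q0 where q0: "q0 \<in> Q" by auto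
      then have "Q \<subseteq> {q0}" using all_eq by auto
      then have "card Q \<le> card {q0}" by (rule card_mono[rotated]) simp
      then show ?thesis by simp
    qed
    have nh: "n = 1" "h = 0" using True assms(1) unfolding E_def by auto
    have "(1::real) \<le> 2 ^ 7 * exp (3 / 2)"
    proof -
      have "(1::real) \<le> exp (3/2)" by simp
      then have "(1::real) \<le> 128 * exp (3/2)" by linarith
      then show ?thesis by simp
    qed
    then have "real (card Q) \<le> (2 ^ 7 * exp (3 / 2)) ^ (n + h) * real h ^ h"
      using cQ nh by simp
    then show ?thesis unfolding num_UMap_def Q_def .
  next
    case False
    then have Epos: "E > 0" by simp
    have cardQ: "card Q * fact n \<le> 4 * E * card (Bset E)"
    proof (cases "finite Q")
      case False then show ?thesis by simp
    next
      case True
      define rp where "rp q = (SOME M. M \<in> UMap_reps n h \<and> q = map_iso `` {M})" for q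
      have rp: "rp q \<in> UMap_reps n h \<and> q = map_iso `` {rp q}" if "q \<in> Q" for q
      proof -
        have "\<exists>M. M \<in> UMap_reps n h \<and> q = map_iso `` {M}" using that Qeq by auto
        then show ?thesis unfolding rp_def by (rule someI_ex)
      qed
      have um: "umap (rp q)" if "q \<in> Q" for q
        using rep[of "rp q"] rp[OF that] Epos by unfold_locales auto
      define T where "T q = umap.NS (rp q)" for q
      have TB: "T q \<subseteq> Bset E" if "q \<in> Q" for q
        using umap.NS_B[OF um[OF that]] rep[of "rp q"] rp[OF that] unfolding T_def by auto
      have finT: "finite (T q)" if "q \<in> Q" for q
        using TB[OF that] finite_Bset finite_subset by blast
      have Tc: "fact n \<le> 4 * E * card (T q)" if "q \<in> Q" for q
      proof -
        have M: "rp q \<in> UMap_reps n h" using rp[OF that] by simp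
        have "card (umap.V (rp q)) = num_vertices (rp q)"
          using rep[OF M] Epos
          by (simp add: umap.V_def[OF um[OF that]] umap.R_def[OF um[OF that]] num_vertices_def num_orbits_def)
        then show ?thesis using umap.NS_card[OF um[OF that]] rep[OF M] unfolding T_def by simp
      qed
      have disj: "T q \<inter> T q' = {}" if "q \<in> Q" "q' \<in> Q" "q \<noteq> q'" for q q'
      proof (rule ccontr)
        assume "T q \<inter> T q' \<noteq> {}"
        then obtain N where "N \<in> T q" "N \<in> T q'" by auto
        then have "(rp q, N) \<in> map_iso" "(rp q', N) \<in> map_iso"
          using umap.NS_iso[OF um[OF that(1)]] umap.NS_iso[OF um[OF that(2)]] unfolding T_def by auto
        then have "map_iso `` {rp q} = map_iso `` {rp q'}"
          using classes_eq rep rp that by blast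
        then show False using rp that by metis
      qed
      have "card Q * fact n = (\<Sum>q\<in>Q. fact n)" by simp
      also have "\<dots> \<le> (\<Sum>q\<in>Q. 4 * E * card (T q))" by (rule sum_mono) (rule Tc)
      also have "\<dots> = 4 * E * (\<Sum>q\<in>Q. card (T q))" by (simp add: sum_distrib_left)
      also have "(\<Sum>q\<in>Q. card (T q)) = card (\<Union>q\<in>Q. T q)"
        using card_UN_disjoint[OF True, of T] finT disj by simp
      also have "card (\<Union>q\<in>Q. T q) \<le> card (Bset E)"
        by (rule card_mono[OF finite_Bset]) (use TB in auto)
      finally show ?thesis by simp
    qed
    also have "\<dots> \<le> 4 * E * (4 ^ E * (4 ^ E * (4 * E) ^ E))"
      using card_Bset[OF Epos] by simp
    finally have "card Q * fact n \<le> 4 * E * (4 ^ E * (4 ^ E * (4 * E) ^ E))" .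
    then have "real (card Q) \<le> (2 ^ 7 * exp (3 / 2)) ^ (n + h) * real h ^ h"
      using analytic[OF assms(1) E_def] Epos by simp
    then show ?thesis unfolding num_UMap_def Q_def .
  qed
qed

end
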